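(* Let $G=(V,E)$ be a finite simple graph on $n$ vertices. Let $\mathcal{A}$ be the set of all graphs $G''$ with vertex set $V$ that can be obtained as follows: for each vertex $v\in V$, if $v$ is not isolated, choose two distinct vertices of the closed neighborhood $N(v)\cup\{v\}$ and put the edge between them into $G''$; if $v$ is isolated, put a loop on $v$ into $G''$ (an edge already present is not duplicated). Let $G''_{\min}\in\mathcal{A}$ minimize $n-\alpha(G'')$ over $G''\in\mathcal{A}$. Then $$\gamma(G)=n-\alpha(G''_{\min})=\beta(G''_{\min}).$$
   Context: $N(v)$ denotes the set of neighbors of $v$ in $G$. A set $S\subseteq V$ is a dominating set of $G$ if every vertex of $V$ is in $S$ or has a neighbor in $S$; $\gamma(G)$ is the minimum size of a dominating set. For a graph $H$ possibly with loops, an independent set is a set of vertices containing no two endpoints of an edge and no vertex carrying a loop, and $\alpha(H)$ is the maximum size of an independent set; a vertex cover is a set of vertices meeting every edge (so it contains every vertex carrying a loop), and $\beta(H)$ is the minimum size of a vertex cover. *)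

theory Defs
  imports Main
begin

definition simple_graph :: "'a set \<Rightarrow> 'a set set \<Rightarrow> bool" where
  "simple_graph V E \<longleftrightarrow> finite V \<and> (\<forall>e\<in>E. e \<subseteq> V \<and> card e = 2)"

definition neighbors :: "'a set set \<Rightarrow> 'a \<Rightarrow> 'a set" where
  "neighbors E v = {u. {u, v} \<in> E}"

definition closed_nbhd :: "'a set set \<Rightarrow> 'a \<Rightarrow> 'a set" where
  "closed_nbhd E v = neighbors E v \<union> {v}"

definition isolated :: "'a set set \<Rightarrow> 'a \<Rightarrow> bool" where
  "isolated E v \<longleftrightarrow> neighbors E v = {}"

definition dominating_set :: "'a set \<Rightarrow> 'a set set \<Rightarrow> 'a set \<Rightarrow> bool" where
  "dominating_set V E S \<longleftrightarrow> S \<subseteq> V \<and> (\<forall>v\<in>V. v \<in> S \<or> (\<exists>u\<in>S. u \<in> neighbors E v))"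

definition domination_number :: "'a set \<Rightarrow> 'a set set \<Rightarrow> nat" where
  "domination_number V E = Min {card S | S. dominating_set V E S}"

text \<open>Graphs possibly with loops: edges are nonempty sets of at most two vertices;
  a loop on v is the edge {v}.\<close>
definition independent_set :: "'a set \<Rightarrow> 'a set set \<Rightarrow> 'a set \<Rightarrow> bool" where
  "independent_set V F S \<longleftrightarrow> S \<subseteq> V \<and> (\<forall>e\<in>F. \<not> e \<subseteq> S)"

definition independence_number :: "'a set \<Rightarrow> 'a set set \<Rightarrow> nat" where
  "independence_number V F = Max {card S | S. independent_set V F S}"

definition vertex_cover :: "'a set \<Rightarrow> 'a set set \<Rightarrow> 'a set \<Rightarrow> bool" where
  "vertex_cover V F S \<longleftrightarrow> S \<subseteq> V \<and> (\<forall>e\<in>F. e \<inter> S \<noteq> {})"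

definition vertex_cover_number :: "'a set \<Rightarrow> 'a set set \<Rightarrow> nat" where
  "vertex_cover_number V F = Min {card S | S. vertex_cover V F S}"

definition choice_graphs :: "'a set \<Rightarrow> 'a set set \<Rightarrow> 'a set set set" where
  "choice_graphs V E = {f ` V | f.
     \<forall>v\<in>V. (\<not> isolated E v \<longrightarrow> (\<exists>x y. x \<noteq> y \<and> x \<in> closed_nbhd E v \<and> y \<in> closed_nbhd E v \<and> f v = {x, y}))
          \<and> (isolated E v \<longrightarrow> f v = {v})}"

end

theory Submission
  imports Defs
begin

lemma fin_cards:
  assumes "finite V" "\<And>S. P S \<Longrightarrow> S \<subseteq> V"
  shows "finite {card S | S. P S}"
proof -
  have "{card S | S. P S} \<subseteq> card ` Pow V" using assms(2) by blast
  thus ?thesis using assms(1) finite_subset by blast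
qed

lemma beta_alpha:
  assumes fin: "finite V" and FV: "\<forall>e\<in>F. e \<subseteq> V \<and> e \<noteq> {}"
  shows "vertex_cover_number V F = card V - independence_number V F"
proof -
  let ?I = "{card S | S. independent_set V F S}"
  let ?C = "{card S | S. vertex_cover V F S}"
  have fI: "finite ?I" by (rule fin_cards[OF fin]) (auto simp: independent_set_def)
  have fC: "finite ?C" by (rule fin_cards[OF fin]) (auto simp: vertex_cover_def)
  have "independent_set V F {}" using FV by (auto simp: independent_set_def)
  hence neI: "?I \<noteq> {}" by blast
  have "vertex_cover V F V" using FV by (auto simp: vertex_cover_def)
  hence neC: "?C \<noteq> {}" by blast
  obtain S0 where S0: "independent_set V F S0" "card S0 = independence_number V F"
    using Max_in[OF fI neI] unfolding independence_number_def by auto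
  obtain C0 where C0: "vertex_cover V F C0" "card C0 = vertex_cover_number V F"
    using Min_in[OF fC neC] unfolding vertex_cover_number_def by auto
  have "vertex_cover V F (V - S0)" using S0(1) FV
    unfolding independent_set_def vertex_cover_def by blast
  hence "vertex_cover_number V F \<le> card (V - S0)"
    unfolding vertex_cover_number_def using fC by (intro Min_le) auto
  also have "card (V - S0) = card V - card S0"
    using S0(1) fin unfolding independent_set_def by (meson card_Diff_subset finite_subset)
  finally have 1: "vertex_cover_number V F \<le> card V - independence_number V F" using S0 by simp
  have "independent_set V F (V - C0)" using C0(1) FV
    unfolding independent_set_def vertex_cover_def by blast
  hence "card (V - C0) \<le> independence_number V F"
    unfolding independence_number_def using fI by (intro Max_ge) auto
  moreover have "card (V - C0) = card V - card C0"
    using C0(1) fin unfolding vertex_cover_def by (meson card_Diff_subset finite_subset)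
  moreover have "card C0 \<le> card V" using C0(1) fin by (simp add: card_mono vertex_cover_def)
  ultimately show ?thesis using 1 C0(2) by linarith
qed

lemma nbhd_sub:
  assumes "simple_graph V E" "u \<in> closed_nbhd E v" "v \<in> V"
  shows "u \<in> V"
proof (cases "u = v")
  case False
  hence "{u, v} \<in> E" using assms(2) by (auto simp: closed_nbhd_def neighbors_def)
  thus ?thesis using assms(1) by (auto simp: simple_graph_def)
qed (use assms in auto)

lemma choice_edges:
  assumes "simple_graph V E" "F \<in> choice_graphs V E"
  shows "\<forall>e\<in>F. e \<subseteq> V \<and> e \<noteq> {}"
proof
  fix e assume e: "e \<in> F"
  obtain f where f: "F = f ` V" and
    fp: "\<forall>v\<in>V. (\<not> isolated E v \<longrightarrow> (\<exists>x y. x \<noteq> y \<and> x \<in> closed_nbhd E v \<and> y \<in> closed_nbhd E v \<and> f v = {x, y}))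
          \<and> (isolated E v \<longrightarrow> f v = {v})"
    using assms(2) unfolding choice_graphs_def by blast
  obtain v where v: "v \<in> V" "e = f v" using e f by blast
  show "e \<subseteq> V \<and> e \<noteq> {}"
  proof (cases "isolated E v")
    case True thus ?thesis using fp v by auto
  next
    case False
    then obtain x y where "x \<in> closed_nbhd E v" "y \<in> closed_nbhd E v" "f v = {x, y}"
      using fp v by blast
    thus ?thesis using nbhd_sub[OF assms(1) _ v(1)] v by auto
  qed
qed

lemma gamma_le:
  assumes G: "simple_graph V E" and F: "F \<in> choice_graphs V E"
  shows "domination_number V E \<le> vertex_cover_number V F"
proof -
  have fin: "finite V" using G by (simp add: simple_graph_def)
  have FV: "\<forall>e\<in>F. e \<subseteq> V \<and> e \<noteq> {}" using choice_edges[OF G F] .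
  let ?C = "{card S | S. vertex_cover V F S}"
  have fC: "finite ?C" by (rule fin_cards[OF fin]) (auto simp: vertex_cover_def)
  have "vertex_cover V F V" using FV by (auto simp: vertex_cover_def)
  hence neC: "?C \<noteq> {}" by blast
  obtain C0 where C0: "vertex_cover V F C0" "card C0 = vertex_cover_number V F"
    using Min_in[OF fC neC] unfolding vertex_cover_number_def by auto
  obtain f where f: "F = f ` V" and
    fp: "\<forall>v\<in>V. (\<not> isolated E v \<longrightarrow> (\<exists>x y. x \<noteq> y \<and> x \<in> closed_nbhd E v \<and> y \<in> closed_nbhd E v \<and> f v = {x, y}))
          \<and> (isolated E v \<longrightarrow> f v = {v})"
    using F unfolding choice_graphs_def by blast
  have sub: "f v \<subseteq> closed_nbhd E v" if "v \<in> V" for v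
    using fp that by (cases "isolated E v") (auto simp: closed_nbhd_def)
  have "dominating_set V E C0"
    unfolding dominating_set_def
  proof (intro conjI ballI)
    show "C0 \<subseteq> V" using C0(1) by (simp add: vertex_cover_def)
    fix v assume v: "v \<in> V"
    have "f v \<inter> C0 \<noteq> {}" using C0(1) v f by (auto simp: vertex_cover_def)
    then obtain u where "u \<in> f v" "u \<in> C0" by blast
    with sub[OF v] show "v \<in> C0 \<or> (\<exists>u\<in>C0. u \<in> neighbors E v)"
      by (auto simp: closed_nbhd_def)
  qed
  hence "domination_number V E \<le> card C0"
    unfolding domination_number_def
    by (intro Min_le fin_cards[OF fin]) (auto simp: dominating_set_def)
  thus ?thesis using C0 by simp
qed

lemma exists_good:
  assumes G: "simple_graph V E"
  shows "\<exists>F\<in>choice_graphs V E. vertex_cover_number V F \<le> domination_number V E"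
proof -
  have fin: "finite V" using G by (simp add: simple_graph_def)
  let ?D = "{card S | S. dominating_set V E S}"
  have fD: "finite ?D" by (rule fin_cards[OF fin]) (auto simp: dominating_set_def)
  have "dominating_set V E V" by (auto simp: dominating_set_def)
  hence neD: "?D \<noteq> {}" by blast
  obtain D where D: "dominating_set V E D" "card D = domination_number V E"
    using Min_in[OF fD neD] unfolding domination_number_def by auto
  define g where "g v = (if v \<in> D then (if isolated E v then v else (SOME u. u \<in> neighbors E v))
                         else (SOME u. u \<in> D \<and> u \<in> neighbors E v))" for v
  define f where "f v = {v, g v}" for v
  have nbne: "u \<noteq> v" if "u \<in> neighbors E v" for u v
    using that G unfolding neighbors_def simple_graph_def by fastforce
  have gp: "(isolated E v \<longrightarrow> g v = v) \<and> (\<not> isolated E v \<longrightarrow> g v \<in> neighbors E v)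
      \<and> (v \<in> D \<or> g v \<in> D)" if v: "v \<in> V" for v
  proof (cases "v \<in> D")
    case True
    then show ?thesis unfolding g_def isolated_def by (auto intro: someI_ex)
  next
    case False
    then obtain u where u: "u \<in> D" "u \<in> neighbors E v" using D(1) v
      unfolding dominating_set_def by blast
    hence "(SOME u. u \<in> D \<and> u \<in> neighbors E v) \<in> D \<and> (SOME u. u \<in> D \<and> u \<in> neighbors E v) \<in> neighbors E v"
      by (intro someI_ex[where P="\<lambda>u. u \<in> D \<and> u \<in> neighbors E v"]) blast
    hence "g v \<in> D \<and> g v \<in> neighbors E v" unfolding g_def using False by simp
    then show ?thesis unfolding isolated_def by auto
  qed
  have Fin: "f ` V \<in> choice_graphs V E"
    unfolding choice_graphs_def
  proof (rule CollectI, rule exI[of _ f], intro conjI refl ballI impI)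
    fix v assume v: "v \<in> V" and "\<not> isolated E v"
    hence "g v \<in> neighbors E v" using gp by blast
    thus "\<exists>x y. x \<noteq> y \<and> x \<in> closed_nbhd E v \<and> y \<in> closed_nbhd E v \<and> f v = {x, y}"
      using nbne by (intro exI[of _ v] exI[of _ "g v"]) (auto simp: closed_nbhd_def f_def)
  next
    fix v assume v: "v \<in> V" and "isolated E v"
    thus "f v = {v}" using gp by (auto simp: f_def)
  qed
  have "vertex_cover V (f ` V) D"
    using D(1) gp unfolding vertex_cover_def dominating_set_def f_def by auto
  hence "vertex_cover_number V (f ` V) \<le> card D"
    unfolding vertex_cover_number_def
    by (intro Min_le fin_cards[OF fin]) (auto simp: vertex_cover_def)
  thus ?thesis using Fin D(2) by auto
qed

theorem theorem2p4:
  fixes V :: "'a set" and E :: "'a set set" and Fmin :: "'a set set"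
  assumes "simple_graph V E"
    and "Fmin \<in> choice_graphs V E"
    and "\<forall>F\<in>choice_graphs V E. card V - independence_number V Fmin \<le> card V - independence_number V F"
  shows "domination_number V E = card V - independence_number V Fmin
       \<and> card V - independence_number V Fmin = vertex_cover_number V Fmin"
proof -
  have fin: "finite V" using assms(1) by (simp add: simple_graph_def)
  have ba: "vertex_cover_number V F = card V - independence_number V F"
    if "F \<in> choice_graphs V E" for F
    using beta_alpha[OF fin choice_edges[OF assms(1) that]] .
  obtain F where F: "F \<in> choice_graphs V E" "vertex_cover_number V F \<le> domination_number V E"
    using exists_good[OF assms(1)] by blast
  have "vertex_cover_number V Fmin \<le> vertex_cover_number V F"
    using assms(3) F(1) ba[OF F(1)] ba[OF assms(2)] by auto
  moreover have "domination_number V E \<le> vertex_cover_number V Fmin"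
    using gamma_le[OF assms(1,2)] .
  ultimately show ?thesis using F(2) ba[OF assms(2)] by linarith
qed

end
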